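(* Let $G$ be a graph with an edge coloring $c$, and let $\mathcal{L}$ be the set of connected representing graphs of $(G,c)$. If $$\mathcal{C}_0=\bigcap_{L\in\mathcal{L}}\{c(e): e\in T(L)\}$$ is nonempty, then $(G,c)$ is a good edge coloring, witnessed by a connected representing graph $L^\ast$ and a set of cut edges $X\subseteq T(L^\ast)$ with $\mathcal{C}_0\subseteq c(X)$; that is, $X$ is nonempty, and every edge of $G$ joining two different components of $L^\ast - X$ has a color in $c(X)$.
   Context: A representing graph of a graph $G$ with edge coloring $c$ is a spanning subgraph of $G$ obtained by taking exactly one edge of each color used by $c$. For a set of edges $E$, $c(E)$ denotes the set of colors of edges in $E$. For a graph $L$, $T(L)$ denotes its set of cut edges (bridges). The pair $(G,c)$ is a good edge coloring if there is a connected representing graph $L$ of $G$ and a nonempty set of cut edges $X\subseteq T(L)$ such that each edge of $G$ between different components of $L-X$ is colored by a color in $c(X)$. *)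

theory Defs
  imports Main
begin

definition graph :: "'v set \<Rightarrow> 'v set set \<Rightarrow> bool" where
  "graph V E \<longleftrightarrow> finite V \<and> (\<forall>e\<in>E. e \<subseteq> V \<and> card e = 2)"

definition adj :: "'v set set \<Rightarrow> ('v \<times> 'v) set" where
  "adj F = {(u, v). {u, v} \<in> F}"

definition reachable :: "'v set set \<Rightarrow> 'v \<Rightarrow> 'v \<Rightarrow> bool" where
  "reachable F u v \<longleftrightarrow> (u, v) \<in> (adj F)\<^sup>*"

definition connected_graph :: "'v set \<Rightarrow> 'v set set \<Rightarrow> bool" where
  "connected_graph V F \<longleftrightarrow> (\<forall>u\<in>V. \<forall>v\<in>V. reachable F u v)"

definition cut_edges :: "'v set set \<Rightarrow> 'v set set" where
  "cut_edges F = {e \<in> F. \<exists>u v. e = {u, v} \<and> \<not> reachable (F - {e}) u v}"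

text \<open>Representing graph of (G,c), G = (V,E): spanning subgraph (V,F) containing
  exactly one edge of each color used by c on E.\<close>
definition representing :: "'v set set \<Rightarrow> ('v set \<Rightarrow> 'c) \<Rightarrow> 'v set set \<Rightarrow> bool" where
  "representing E c F \<longleftrightarrow> F \<subseteq> E \<and> bij_betw c F (c ` E)"

definition connected_representing ::
  "'v set \<Rightarrow> 'v set set \<Rightarrow> ('v set \<Rightarrow> 'c) \<Rightarrow> 'v set set \<Rightarrow> bool" where
  "connected_representing V E c F \<longleftrightarrow> representing E c F \<and> connected_graph V F"

definition good_witness ::
  "'v set \<Rightarrow> 'v set set \<Rightarrow> ('v set \<Rightarrow> 'c) \<Rightarrow> 'v set set \<Rightarrow> 'v set set \<Rightarrow> bool" where
  "good_witness V E c F X \<longleftrightarrow> connected_representing V E c F \<and> X \<noteq> {} \<and> X \<subseteq> cut_edges F \<and>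
     (\<forall>u v. {u, v} \<in> E \<and> \<not> reachable (F - X) u v \<longrightarrow> c {u, v} \<in> c ` X)"

definition good_edge_coloring :: "'v set \<Rightarrow> 'v set set \<Rightarrow> ('v set \<Rightarrow> 'c) \<Rightarrow> bool" where
  "good_edge_coloring V E c \<longleftrightarrow> (\<exists>F X. good_witness V E c F X)"

end

theory Submission
  imports Defs
begin


lemma reach_refl[simp]: "reachable F x x"
  by (simp add: reachable_def)

lemma adj_sym: "sym (adj F)"
  unfolding sym_def adj_def by (auto simp: insert_commute)

lemma reach_sym: "reachable F x y \<Longrightarrow> reachable F y x"
  using sym_rtrancl[OF adj_sym, of F] unfolding reachable_def sym_def by blast

lemma reach_trans: "reachable F x y \<Longrightarrow> reachable F y z \<Longrightarrow> reachable F x z"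
  unfolding reachable_def by auto

lemma reach_edge: "{a, b} \<in> F \<Longrightarrow> reachable F a b"
  unfolding reachable_def adj_def by auto

lemma reach_sub:
  assumes "\<And>a b. {a, b} \<in> F \<Longrightarrow> reachable G a b" "reachable F x y"
  shows "reachable G x y"
proof -
  have "adj F \<subseteq> (adj G)\<^sup>*" using assms(1) unfolding adj_def reachable_def by auto
  then have "(adj F)\<^sup>* \<subseteq> (adj G)\<^sup>*"
    using rtrancl_subset_rtrancl by blast
  then show ?thesis using assms(2) unfolding reachable_def by auto
qed

lemma reach_mono: "F \<subseteq> G \<Longrightarrow> reachable F x y \<Longrightarrow> reachable G x y"
  by (rule reach_sub[of F G]) (auto intro: reach_edge)

lemma reach_insert:
  assumes "reachable (insert {u, v} F) x y"
  shows "reachable F x y \<or> (reachable F x u \<and> reachable F v y) \<or> (reachable F x v \<and> reachable F u y)"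
proof -
  have a: "adj (insert {u, v} F) = insert (u, v) (insert (v, u) (adj F))"
    unfolding adj_def by (auto simp: doubleton_eq_iff)
  show ?thesis using assms unfolding reachable_def a rtrancl_insert
    by (auto intro: rtrancl_trans)
qed

definition cls :: "'v set \<Rightarrow> 'v set set \<Rightarrow> 'v \<Rightarrow> 'v set" where
  "cls V F x = {y\<in>V. reachable F x y}"

definition kap :: "'v set \<Rightarrow> 'v set set \<Rightarrow> nat" where
  "kap V F = card (cls V F ` V)"

lemma cls_eq: assumes "reachable F x y" shows "cls V F x = cls V F y"
proof -
  have "reachable F x z = reachable F y z" for z
    using assms reach_trans reach_sym by metis
  then show ?thesis unfolding cls_def by auto
qed

lemma cls_eqD: assumes "cls V F x = cls V F y" "y \<in> V" shows "reachable F x y"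
proof -
  have "y \<in> cls V F y" using assms(2) unfolding cls_def by simp
  then have "y \<in> cls V F x" using assms(1) by simp
  then show ?thesis unfolding cls_def by simp
qed

lemma kap_map:
  assumes "\<And>x y. x \<in> V \<Longrightarrow> y \<in> V \<Longrightarrow> reachable F x y \<Longrightarrow> reachable G x y"
  defines "h \<equiv> (\<lambda>C. {y\<in>V. \<exists>x\<in>C. reachable G x y})"
  shows "cls V G ` V = h ` (cls V F ` V)" "\<And>x. x \<in> V \<Longrightarrow> h (cls V F x) = cls V G x"
proof -
  show hx: "h (cls V F x) = cls V G x" if "x \<in> V" for x
  proof (rule set_eqI, rule iffI)
    fix y assume "y \<in> h (cls V F x)"
    then obtain x' where "y \<in> V" "x' \<in> V" "reachable F x x'" "reachable G x' y"
      unfolding h_def cls_def by blast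
    then show "y \<in> cls V G x" using assms(1)[of x x'] that reach_trans[of G x x' y]
      unfolding cls_def by blast
  next
    fix y assume "y \<in> cls V G x"
    then show "y \<in> h (cls V F x)" using that unfolding h_def cls_def by auto
  qed
  show "cls V G ` V = h ` (cls V F ` V)"
    unfolding image_image using hx by auto
qed

lemma kap_le:
  assumes "finite V" "\<And>x y. x \<in> V \<Longrightarrow> y \<in> V \<Longrightarrow> reachable F x y \<Longrightarrow> reachable G x y"
  shows "kap V G \<le> kap V F"
proof -
  define h where "h = (\<lambda>C. {y\<in>V. \<exists>x\<in>C. reachable G x y})"
  have e: "cls V G ` V = h ` (cls V F ` V)" unfolding h_def by (rule kap_map(1)[OF assms(2)])
  show ?thesis unfolding kap_def e using assms(1) by (intro card_image_le) auto
qed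

lemma kap_eq:
  assumes "finite V" "\<And>x y. x \<in> V \<Longrightarrow> y \<in> V \<Longrightarrow> reachable F x y \<Longrightarrow> reachable G x y"
    and "kap V G = kap V F" "x \<in> V" "y \<in> V" "reachable G x y"
  shows "reachable F x y"
proof -
  define h where "h = (\<lambda>C. {y\<in>V. \<exists>x\<in>C. reachable G x y})"
  have e: "cls V G ` V = h ` (cls V F ` V)" unfolding h_def by (rule kap_map(1)[OF assms(2)])
  have hx: "h (cls V F z) = cls V G z" if "z \<in> V" for z
    unfolding h_def by (rule kap_map(2)[OF assms(2) that])
  have fin: "finite (cls V F ` V)" using assms(1) by simp
  have "card (h ` (cls V F ` V)) = card (cls V F ` V)"
    using assms(3) unfolding kap_def e .
  then have inj: "inj_on h (cls V F ` V)"
    using fin by (rule eq_card_imp_inj_on[rotated])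
  have "cls V G x = cls V G y" using assms(6) by (rule cls_eq)
  then have "h (cls V F x) = h (cls V F y)" using hx assms(4,5) by simp
  then have "cls V F x = cls V F y"
    using inj assms(4,5) unfolding inj_on_def by blast
  then show ?thesis using assms(5) by (rule cls_eqD)
qed

lemma kap_insert_cross:
  assumes "finite V" "u \<in> V" "v \<in> V" "\<not> reachable F u v"
  shows "kap V (insert {u, v} F) < kap V F"
proof -
  let ?G = "insert {u, v} F"
  have m: "\<And>x y. x \<in> V \<Longrightarrow> y \<in> V \<Longrightarrow> reachable F x y \<Longrightarrow> reachable ?G x y"
    by (rule reach_mono[of F]) auto
  define h where "h = (\<lambda>C. {y\<in>V. \<exists>x\<in>C. reachable ?G x y})"
  have e: "cls V ?G ` V = h ` (cls V F ` V)" unfolding h_def by (rule kap_map(1)[OF m])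
  have hx: "h (cls V F z) = cls V ?G z" if "z \<in> V" for z
    unfolding h_def by (rule kap_map(2)[OF m that])
  have "cls V ?G u = cls V ?G v" by (rule cls_eq) (simp add: reach_edge)
  then have "h (cls V F u) = h (cls V F v)" using hx assms(2,3) by simp
  moreover have "cls V F u \<noteq> cls V F v"
  proof
    assume "cls V F u = cls V F v"
    then have "reachable F u v" using assms(3) by (rule cls_eqD)
    then show False using assms(4) by simp
  qed
  ultimately have "\<not> inj_on h (cls V F ` V)" using assms(2,3) unfolding inj_on_def by blast
  then have "card (h ` (cls V F ` V)) \<noteq> card (cls V F ` V)"
    using assms(1) eq_card_imp_inj_on[of "cls V F ` V" h] by auto
  moreover have "card (h ` (cls V F ` V)) \<le> card (cls V F ` V)"
    using assms(1) by (intro card_image_le) auto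
  ultimately show ?thesis unfolding kap_def e by simp
qed

lemma kap_insert_ge:
  assumes "finite V"
  shows "kap V F \<le> kap V (insert {u, v} F) + 1"
proof -
  let ?G = "insert {u, v} F"
  have m: "\<And>x y. x \<in> V \<Longrightarrow> y \<in> V \<Longrightarrow> reachable F x y \<Longrightarrow> reachable ?G x y"
    by (rule reach_mono[of F]) auto
  define h where "h = (\<lambda>C. {y\<in>V. \<exists>x\<in>C. reachable ?G x y})"
  have e: "cls V ?G ` V = h ` (cls V F ` V)" unfolding h_def by (rule kap_map(1)[OF m])
  have hx: "h (cls V F z) = cls V ?G z" if "z \<in> V" for z
    unfolding h_def by (rule kap_map(2)[OF m that])
  let ?A = "cls V F ` V - {cls V F v}"
  have "inj_on h ?A"
  proof (rule inj_onI)
    fix C1 C2 assume c1: "C1 \<in> ?A" and c2: "C2 \<in> ?A" and eq: "h C1 = h C2"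
    obtain x where x: "x \<in> V" "C1 = cls V F x" using c1 by auto
    obtain y where y: "y \<in> V" "C2 = cls V F y" using c2 by auto
    have "cls V ?G x = cls V ?G y" using eq x y hx by simp
    then have "reachable ?G x y" using y(1) by (rule cls_eqD)
    then have r: "reachable F x y \<or> (reachable F x u \<and> reachable F v y) \<or> (reachable F x v \<and> reachable F u y)"
      by (rule reach_insert)
    have n1: "cls V F y \<noteq> cls V F v" using c2 y by auto
    have n2: "cls V F x \<noteq> cls V F v" using c1 x by auto
    have "\<not> reachable F v y"
    proof
      assume "reachable F v y" then have "cls V F v = cls V F y" by (rule cls_eq)
      then show False using n1 by simp
    qed
    moreover have "\<not> reachable F x v"
    proof
      assume "reachable F x v" then have "cls V F x = cls V F v" by (rule cls_eq)
      then show False using n2 by simp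
    qed
    ultimately have "reachable F x y" using r by blast
    then have "cls V F x = cls V F y" by (rule cls_eq)
    then show "C1 = C2" using x y by simp
  qed
  then have "card ?A = card (h ` ?A)" by (simp add: card_image)
  also have "\<dots> \<le> card (h ` (cls V F ` V))"
    using assms by (intro card_mono) auto
  also have "\<dots> = kap V ?G" unfolding kap_def e ..
  finally have "card ?A \<le> kap V ?G" .
  moreover have "kap V F \<le> card ?A + 1"
    unfolding kap_def using card_Diff_singleton_if[of "cls V F ` V" "cls V F v"] by auto
  ultimately show ?thesis by simp
qed

lemma kap_connected:
  assumes "V \<noteq> {}" "connected_graph V F"
  shows "kap V F = 1"
proof -
  have "cls V F ` V = {V}"
    using assms unfolding cls_def connected_graph_def by auto
  then show ?thesis unfolding kap_def by simp
qed

lemma kap_remove: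
  assumes "finite V" "finite Y" "\<forall>e\<in>Y. \<exists>u v. e = {u, v}"
  shows "kap V (F - Y) \<le> kap V F + card Y"
  using assms(2,3)
proof (induction Y rule: finite_induct)
  case empty then show ?case by simp
next
  case (insert y Y)
  obtain u v where y: "y = {u, v}" using insert.prems by auto
  have IH: "kap V (F - Y) \<le> kap V F + card Y" using insert by simp
  have eq: "F - insert y Y = (F - Y) - {y}" by auto
  have "kap V ((F - Y) - {y}) \<le> kap V (F - Y) + 1"
  proof (cases "y \<in> F - Y")
    case True
    then have "insert {u, v} ((F - Y) - {y}) = F - Y" using y by auto
    then show ?thesis using kap_insert_ge[OF assms(1), of "(F - Y) - {y}" u v] by simp
  next
    case False
    then show ?thesis by simp
  qed
  then show ?case using IH insert.hyps eq by simp
qed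

lemma cut_mono:
  assumes "e \<in> G" "G \<subseteq> F" "e \<in> cut_edges F"
  shows "e \<in> cut_edges G"
proof -
  obtain u v where uv: "e = {u, v}" "\<not> reachable (F - {e}) u v"
    using assms(3) unfolding cut_edges_def by auto
  have sub: "G - {e} \<subseteq> F - {e}" using assms(2) by auto
  have "\<not> reachable (G - {e}) u v"
  proof
    assume "reachable (G - {e}) u v"
    then have "reachable (F - {e}) u v" by (rule reach_mono[OF sub])
    then show False using uv by simp
  qed
  then show ?thesis using assms(1) uv(1) unfolding cut_edges_def by blast
qed

lemma kap_remove_bridges:
  assumes "finite V" "finite Y" "Y \<subseteq> cut_edges F" "\<forall>e\<in>F. e \<subseteq> V"
  shows "kap V F + card Y \<le> kap V (F - Y)"
  using assms(2,3)
proof (induction Y rule: finite_induct)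
  case empty then show ?case by simp
next
  case (insert y Y)
  have IH: "kap V F + card Y \<le> kap V (F - Y)" using insert by simp
  have yF: "y \<in> F" using insert.prems unfolding cut_edges_def by auto
  have "y \<in> cut_edges (F - Y)"
    using cut_mono[of y "F - Y" F] yF insert by auto
  then obtain u v where y: "y = {u, v}" "\<not> reachable ((F - Y) - {y}) u v"
    unfolding cut_edges_def by auto
  have uv: "u \<in> V" "v \<in> V" using assms(4) yF y by auto
  have "insert {u, v} ((F - Y) - {y}) = F - Y" using y yF insert.hyps by auto
  then have "kap V (F - Y) < kap V ((F - Y) - {y})"
    using kap_insert_cross[OF assms(1) uv y(2)] by simp
  moreover have "F - insert y Y = (F - Y) - {y}" by auto
  ultimately show ?case using IH insert.hyps by simp
qed

lemma connected_sub:
  assumes "connected_graph V L" "\<And>a b. {a, b} \<in> L \<Longrightarrow> reachable Z a b"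
  shows "connected_graph V Z"
  using assms(1) reach_sub[of L Z, OF assms(2)] unfolding connected_graph_def by blast

lemma connected_remove_nonbridge:
  assumes "connected_graph V L" "g \<notin> cut_edges L"
  shows "connected_graph V (L - {g})"
proof (rule connected_sub[OF assms(1)])
  fix a b assume ab: "{a, b} \<in> L"
  show "reachable (L - {g}) a b"
  proof (cases "{a, b} = g")
    case True
    then show ?thesis using assms(2) ab unfolding cut_edges_def by auto
  next
    case False
    then show ?thesis using ab by (intro reach_edge) auto
  qed
qed

lemma extend_rep:
  assumes "Z \<subseteq> E" "inj_on c Z" "connected_graph V Z"
  shows "\<exists>L. Z \<subseteq> L \<and> connected_representing V E c L"
proof -
  define pick where "pick = (\<lambda>k. SOME e. e \<in> E \<and> c e = k)"
  have pk: "pick k \<in> E \<and> c (pick k) = k" if kE: "k \<in> c ` E" for k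
  proof -
    obtain e where "e \<in> E" "k = c e" using kE by blast
    then have "e \<in> E \<and> c e = k" by simp
    then show ?thesis unfolding pick_def by (rule someI)
  qed
  define L where "L = Z \<union> pick ` (c ` E - c ` Z)"
  have ZL: "Z \<subseteq> L" unfolding L_def by blast
  have LE: "L \<subseteq> E" using assms(1) pk unfolding L_def by blast
  have inj: "inj_on c L"
  proof (rule inj_onI)
    fix x y assume x: "x \<in> L" and y: "y \<in> L" and e: "c x = c y"
    show "x = y"
    proof (cases "x \<in> Z")
      case True
      show ?thesis
      proof (cases "y \<in> Z")
        case True then show ?thesis using \<open>x \<in> Z\<close> e assms(2) inj_onD by metis
      next
        case False
        then obtain k where k: "k \<in> c ` E - c ` Z" "y = pick k" using y unfolding L_def by blast
        then have "c y = k" using pk by blast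
        then have "c x \<notin> c ` Z" using k e by simp
        then show ?thesis using \<open>x \<in> Z\<close> by blast
      qed
    next
      case False
      then obtain k where k: "k \<in> c ` E - c ` Z" "x = pick k" using x unfolding L_def by blast
      then have cx: "c x = k" using pk by blast
      show ?thesis
      proof (cases "y \<in> Z")
        case True
        then have "c y \<in> c ` Z" by blast
        then show ?thesis using k cx e by simp
      next
        case False
        then obtain k' where k': "k' \<in> c ` E - c ` Z" "y = pick k'" using y unfolding L_def by blast
        then have "c y = k'" using pk by blast
        then show ?thesis using k k' cx e by simp
      qed
    qed
  qed
  have img: "c ` L = c ` E"
  proof
    show "c ` L \<subseteq> c ` E" using LE by blast
    show "c ` E \<subseteq> c ` L"
    proof
      fix k assume k: "k \<in> c ` E"
      show "k \<in> c ` L"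
      proof (cases "k \<in> c ` Z")
        case True then show ?thesis using ZL by blast
      next
        case False
        then have "pick k \<in> L" using k unfolding L_def by blast
        moreover have "c (pick k) = k" using pk[OF k] by simp
        ultimately show ?thesis by (metis imageI)
      qed
    qed
  qed
  have "connected_graph V L"
    unfolding connected_graph_def
  proof (intro ballI)
    fix u v assume "u \<in> V" "v \<in> V"
    then have "reachable Z u v" using assms(3) unfolding connected_graph_def by blast
    then show "reachable L u v" by (rule reach_mono[OF ZL])
  qed
  then have "connected_representing V E c L"
    using LE inj img unfolding connected_representing_def representing_def bij_betw_def by blast
  then show ?thesis using ZL by blast
qed

lemma edge_pair:
  assumes "graph V E" "e \<in> E"
  shows "\<exists>u v. e = {u, v} \<and> u \<in> V \<and> v \<in> V"
proof -
  have "card e = 2" "e \<subseteq> V" using assms unfolding graph_def by auto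
  then obtain u v where uv: "e = {u, v}" by (auto simp: card_2_iff)
  then have "u \<in> V" "v \<in> V" using \<open>e \<subseteq> V\<close> by auto
  then show ?thesis using uv by blast
qed

lemma finite_E:
  assumes "graph V E" shows "finite E"
proof -
  have "E \<subseteq> Pow V" using assms unfolding graph_def by auto
  moreover have "finite (Pow V)" using assms unfolding graph_def by simp
  ultimately show ?thesis by (rule finite_subset)
qed

lemma card_X:
  assumes "connected_representing V E c L0" "C0 \<subseteq> c ` E"
  shows "card {x\<in>L0. c x \<in> C0} = card C0"
proof -
  have "bij_betw c L0 (c ` E)"
    using assms(1) unfolding connected_representing_def representing_def by blast
  then have inj: "inj_on c L0" and img: "c ` L0 = c ` E"
    unfolding bij_betw_def by blast+
  have "c ` {x\<in>L0. c x \<in> C0} = C0"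
  proof
    show "c ` {x\<in>L0. c x \<in> C0} \<subseteq> C0" by blast
    show "C0 \<subseteq> c ` {x\<in>L0. c x \<in> C0}"
    proof
      fix k assume k: "k \<in> C0"
      then have "k \<in> c ` E" using assms(2) by (rule subsetD[rotated])
      then have "k \<in> c ` L0" using img by simp
      then obtain x where "x \<in> L0" "c x = k" by blast
      then show "k \<in> c ` {x\<in>L0. c x \<in> C0}" using k by blast
    qed
  qed
  moreover have "inj_on c {x\<in>L0. c x \<in> C0}" using inj by (rule inj_on_subset) (rule Collect_subset)
  ultimately show ?thesis using card_image[of c "{x\<in>L0. c x \<in> C0}"] by simp
qed

lemma lemA:
  assumes g: "graph V E" and L0: "connected_representing V E c L0"
    and C0E: "C0 \<subseteq> c ` E"
    and hC: "\<And>L. connected_representing V E c L \<Longrightarrow> C0 \<subseteq> c ` cut_edges L"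
    and Vne: "V \<noteq> {}"
    and R: "R \<subseteq> E" "inj_on c R" "c ` R \<inter> C0 = {}"
  shows "card C0 < kap V R"
proof (rule ccontr)
  define X where "X = {x\<in>L0. c x \<in> C0}"
  have finV: "finite V" using g unfolding graph_def by simp
  have finE: "finite E" using g by (rule finite_E)
  have cardX: "card X = card C0" unfolding X_def using L0 C0E by (rule card_X)
  have L0E: "L0 \<subseteq> E" and injL0: "inj_on c L0" and conL0: "connected_graph V L0"
    using L0 unfolding connected_representing_def representing_def bij_betw_def by auto
  have XL0: "X \<subseteq> L0" unfolding X_def by blast
  have finX: "finite X" using finite_subset[OF XL0] finite_subset[OF L0E finE] by blast
  have injX: "inj_on c X" using inj_on_subset[OF injL0 XL0] .
  have cX: "c ` X \<subseteq> C0" unfolding X_def by blast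
  assume "\<not> card C0 < kap V R"
  then have "kap V R \<le> card C0" by simp
  then show False using R
  proof (induction "card E - card (R \<inter> L0)" arbitrary: R rule: less_induct)
    case (less R)
    define Z where "Z = R \<union> X"
    have RX: "R \<inter> X = {}" using less.prems(4) cX by blast
    have ZE: "Z \<subseteq> E" unfolding Z_def using less.prems(2) XL0 L0E by blast
    show False
    proof (cases "connected_graph V Z")
      case True
      show False
      proof (cases "X \<subseteq> cut_edges Z")
        case True
        have "\<forall>e\<in>Z. e \<subseteq> V" using ZE g unfolding graph_def by blast
        then have "kap V Z + card X \<le> kap V (Z - X)"
          using kap_remove_bridges[OF finV finX True] by blast
        moreover have "Z - X = R" unfolding Z_def using RX by blast
        moreover have "kap V Z = 1" using kap_connected[OF Vne \<open>connected_graph V Z\<close>] .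
        ultimately show False using less.prems(1) cardX by simp
      next
        case False
        then obtain x where x: "x \<in> X" "x \<notin> cut_edges Z" by blast
        have "inj_on c Z" unfolding Z_def
          using less.prems(3,4) injX cX by (auto simp: inj_on_Un)
        then obtain L where L: "Z \<subseteq> L" "connected_representing V E c L"
          using extend_rep[OF ZE _ \<open>connected_graph V Z\<close>] by blast
        have injL: "inj_on c L" using L(2) unfolding connected_representing_def representing_def bij_betw_def by blast
        have "c x \<in> C0" using x cX by blast
        then have "c x \<in> c ` cut_edges L" using hC[OF L(2)] by (rule subsetD[rotated])
        then obtain x' where x'0: "c x = c x'" "x' \<in> cut_edges L" by (rule imageE)
        then have x': "x' \<in> cut_edges L" "c x' = c x" by simp_all
        have "x' \<in> L" using x'(1) unfolding cut_edges_def by blast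
        moreover have xL: "x \<in> L" using x(1) L(1) unfolding Z_def by blast
        ultimately have "x' = x" using injL x'(2) inj_onD by metis
        then have "x \<in> cut_edges L" using x'(1) by simp
        moreover have "x \<in> Z" using x(1) unfolding Z_def by blast
        ultimately have "x \<in> cut_edges Z" using cut_mono L(1) by blast
        then show False using x(2) by blast
      qed
    next
      case False
      have "\<exists>a b. {a, b} \<in> L0 \<and> \<not> reachable Z a b"
      proof (rule ccontr)
        assume "\<nexists>a b. {a, b} \<in> L0 \<and> \<not> reachable Z a b"
        then have "\<And>a b. {a, b} \<in> L0 \<Longrightarrow> reachable Z a b" by blast
        then have "connected_graph V Z" by (rule connected_sub[OF conL0])
        then show False using False by blast
      qed
      then obtain a b where ab: "{a, b} \<in> L0" "\<not> reachable Z a b" by blast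
      define y where "y = {a, b}"
      have yZ: "y \<notin> Z"
      proof
        assume "y \<in> Z" then have "reachable Z a b" unfolding y_def by (rule reach_edge)
        then show False using ab(2) by simp
      qed
      then have yX: "y \<notin> X" "y \<notin> R" unfolding Z_def by auto
      have yL0: "y \<in> L0" using ab(1) unfolding y_def .
      then have cy: "c y \<notin> C0" using yX(1) unfolding X_def by simp
      have nR: "\<not> reachable R a b"
      proof
        assume "reachable R a b"
        then have "reachable Z a b" by (rule reach_mono[rotated]) (simp add: Z_def)
        then show False using ab(2) by blast
      qed
      have "{a, b} \<in> E" using yL0 L0E unfolding y_def by blast
      then have "{a, b} \<subseteq> V" using g unfolding graph_def by blast
      then have abV: "a \<in> V" "b \<in> V" by simp_all
      have kins: "kap V (insert y R) < kap V R"
        unfolding y_def using kap_insert_cross[OF finV abV nR] .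
      have finRL: "finite (R \<inter> L0)" using finite_subset[OF L0E finE] by blast
      have finIL: "card (S \<inter> L0) \<le> card E" for S
        using finE L0E by (intro card_mono) auto
      show False
      proof (cases "c y \<in> c ` R")
        case False
        let ?R' = "insert y R"
        have "?R' \<inter> L0 = insert y (R \<inter> L0)" using yL0 by blast
        then have "card (?R' \<inter> L0) = card (R \<inter> L0) + 1"
          using yX(2) finRL by simp
        then have lt: "card E - card (?R' \<inter> L0) < card E - card (R \<inter> L0)"
          using finIL[of ?R'] by linarith
        show False
        proof (rule less.hyps[OF lt])
          show "kap V ?R' \<le> card C0" using kins less.prems(1) by simp
          show "?R' \<subseteq> E" using yL0 L0E less.prems(2) by blast
          have "c ` (R - {y}) \<subseteq> c ` R" by (rule image_mono) (rule Diff_subset)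
          then have "c y \<notin> c ` (R - {y})" using False by blast
          then show "inj_on c ?R'" using less.prems(3) by simp
          show "c ` ?R' \<inter> C0 = {}" using less.prems(4) cy by simp
        qed
      next
        case True
        then obtain r where r0: "c y = c r" "r \<in> R" by (rule imageE)
        then have r: "r \<in> R" "c r = c y" by simp_all
        have ry: "r \<noteq> y" using r(1) yX(2) by blast
        have rL0: "r \<notin> L0" using r(2) ry yL0 injL0 inj_onD by metis
        let ?R' = "insert y (R - {r})"
        have "?R' \<inter> L0 = insert y (R \<inter> L0)" using yL0 rL0 by blast
        then have "card (?R' \<inter> L0) = card (R \<inter> L0) + 1"
          using yX(2) finRL by simp
        then have lt: "card E - card (?R' \<inter> L0) < card E - card (R \<inter> L0)"
          using finIL[of ?R'] by linarith
        have eqR: "?R' = insert y R - {r}" using ry by blast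
        have rE: "r \<in> E" using r(1) less.prems(2) by blast
        obtain u v where r2: "r = {u, v}" using edge_pair[OF g rE] by blast
        have "\<forall>e\<in>{r}. \<exists>u v. e = {u, v}" using r2 by blast
        then have "kap V (insert y R - {r}) \<le> kap V (insert y R) + card {r}"
          by (rule kap_remove[OF finV, rotated]) simp
        then have kR': "kap V ?R' \<le> card C0" using eqR kins less.prems(1) by simp
        have injR': "inj_on c ?R'"
        proof -
          have "inj_on c (R - {r})" using less.prems(3) by (rule inj_on_subset) blast
          moreover have "c y \<notin> c ` (R - {r})"
          proof
            assume "c y \<in> c ` (R - {r})"
            then obtain r' where r': "c y = c r'" "r' \<in> R - {r}" by (rule imageE)
            then have "c r' = c r" using r(2) by simp
            then have "r' = r" using less.prems(3) r(1) r'(2) inj_onD by fastforce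
            then show False using r'(2) by simp
          qed
          moreover have "R - {r} - {y} = R - {r}" using yX(2) by blast
          ultimately show ?thesis by simp
        qed
        show False
        proof (rule less.hyps[OF lt])
          show "kap V ?R' \<le> card C0" by (rule kR')
          show "?R' \<subseteq> E" using yL0 L0E less.prems(2) by blast
          show "inj_on c ?R'" by (rule injR')
          have "c ` (R - {r}) \<subseteq> c ` R" by (rule image_mono) (rule Diff_subset)
          then have "c ` (R - {r}) \<inter> C0 = {}" using less.prems(4) by blast
          then show "c ` ?R' \<inter> C0 = {}" using cy by simp
        qed
      qed
    qed
  qed
qed

lemma lemB:
  assumes g: "graph V E" and L0: "connected_representing V E c L0"
    and C0E: "C0 \<subseteq> c ` E"
    and hC: "\<And>L. connected_representing V E c L \<Longrightarrow> C0 \<subseteq> c ` cut_edges L"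
    and Vne: "V \<noteq> {}"
    and L': "connected_representing V E c L'" and kL': "k \<notin> c ` cut_edges L'"
    and kC0: "k \<notin> C0"
    and e: "{u, v} \<in> E" "c {u, v} = k"
  shows "reachable (L0 - {x\<in>L0. c x \<in> C0}) u v"
proof -
  define X where "X = {x\<in>L0. c x \<in> C0}"
  define F0 where "F0 = L0 - X"
  have finV: "finite V" using g unfolding graph_def by simp
  have finE: "finite E" using g by (rule finite_E)
  have cardX: "card X = card C0" unfolding X_def using L0 C0E by (rule card_X)
  have L0E: "L0 \<subseteq> E" and injL0: "inj_on c L0" and conL0: "connected_graph V L0"
    using L0 unfolding connected_representing_def representing_def bij_betw_def by auto
  have L'E: "L' \<subseteq> E" and injL': "inj_on c L'" and conL': "connected_graph V L'"
    and imgL': "c ` L' = c ` E"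
    using L' unfolding connected_representing_def representing_def bij_betw_def by auto
  have XL0: "X \<subseteq> L0" unfolding X_def by blast
  have finX: "finite X" using finite_subset[OF XL0] finite_subset[OF L0E finE] by blast
  have pairs: "\<forall>e\<in>S. \<exists>u v. e = {u, v}" if "S \<subseteq> E" for S
  proof
    fix e assume "e \<in> S" then have "e \<in> E" using that by blast
    then show "\<exists>u v. e = {u, v}" using edge_pair[OF g] by blast
  qed
  have F0E: "F0 \<subseteq> E" unfolding F0_def using L0E by blast
  have kapF0: "kap V F0 \<le> card C0 + 1"
  proof -
    have "kap V F0 \<le> kap V L0 + card X" unfolding F0_def
      by (rule kap_remove[OF finV finX pairs]) (use XL0 L0E in blast)
    then show ?thesis using kap_connected[OF Vne conL0] cardX by simp
  qed
  have injF0: "inj_on c F0" using injL0 by (rule inj_on_subset) (simp add: F0_def)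
  have cF0: "c ` F0 \<inter> C0 = {}" unfolding F0_def X_def by blast
  have uvV: "u \<in> V" "v \<in> V" using e(1) g unfolding graph_def by auto
  have "k \<in> c ` L'" using imgL' e by (metis imageI)
  then obtain gg where gg0: "k = c gg" "gg \<in> L'" by (rule imageE)
  have ggc: "gg \<notin> cut_edges L'"
  proof
    assume "gg \<in> cut_edges L'" then have "c gg \<in> c ` cut_edges L'" by (rule imageI)
    then show False using kL' gg0 by simp
  qed
  have con1: "connected_graph V (L' - {gg})" by (rule connected_remove_nonbridge[OF conL' ggc])
  define X' where "X' = {x\<in>L'. c x \<in> C0}"
  define R1 where "R1 = (L' - {gg}) - X'"
  have cardX': "card X' = card C0" unfolding X'_def using L' C0E by (rule card_X)
  have finX': "finite X'" using finite_subset[of X' E] L'E finE unfolding X'_def by blast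
  let ?P = "\<lambda>R. R \<subseteq> E \<and> inj_on c R \<and> c ` R \<inter> C0 = {} \<and> k \<notin> c ` R \<and> kap V R \<le> card C0 + 1"
  have PR1: "?P R1"
  proof (intro conjI)
    show "R1 \<subseteq> E" unfolding R1_def using L'E by blast
    show "inj_on c R1" using injL' by (rule inj_on_subset) (auto simp: R1_def)
    show "c ` R1 \<inter> C0 = {}" unfolding R1_def X'_def by blast
    show "k \<notin> c ` R1"
    proof
      assume "k \<in> c ` R1"
      then obtain r where r: "k = c r" "r \<in> R1" by (rule imageE)
      then have "r \<in> L'" "r \<noteq> gg" unfolding R1_def by auto
      then show False using injL' gg0 r(1) inj_onD by metis
    qed
    have "kap V R1 \<le> kap V (L' - {gg}) + card X'" unfolding R1_def
      by (rule kap_remove[OF finV finX' pairs]) (use L'E in \<open>auto simp: X'_def\<close>)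
    then show "kap V R1 \<le> card C0 + 1" using kap_connected[OF Vne con1] cardX' by simp
  qed
  have finIL: "card (S \<inter> F0) \<le> card E" for S
    using finE F0E by (intro card_mono) auto
  have finF0: "finite F0" using finite_subset[OF F0E finE] .
  have ex: "\<exists>R. ?P R \<and> (\<forall>a b. {a, b} \<in> F0 \<longrightarrow> reachable R a b)" if "?P R" for R
    using that
  proof (induction "card E - card (R \<inter> F0)" arbitrary: R rule: less_induct)
    case (less R)
    show ?case
    proof (cases "\<forall>a b. {a, b} \<in> F0 \<longrightarrow> reachable R a b")
      case True then show ?thesis using less.prems by blast
    next
      case False
      then obtain a b where ab: "{a, b} \<in> F0" "\<not> reachable R a b" by blast
      define y where "y = {a, b}"
      have yR: "y \<notin> R"
      proof
        assume "y \<in> R" then have "reachable R a b" unfolding y_def by (rule reach_edge)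
        then show False using ab(2) by simp
      qed
      have yF0: "y \<in> F0" using ab(1) unfolding y_def .
      have cy: "c y \<notin> C0" using yF0 unfolding F0_def X_def by simp
      have "{a, b} \<in> E" using yF0 F0E unfolding y_def by blast
      then have "{a, b} \<subseteq> V" using g unfolding graph_def by blast
      then have abV: "a \<in> V" "b \<in> V" by simp_all
      have kins: "kap V (insert y R) < kap V R"
        unfolding y_def using kap_insert_cross[OF finV abV ab(2)] .
      have finRF: "finite (R \<inter> F0)" using finF0 by simp
      have pR: "R \<subseteq> E" "inj_on c R" "c ` R \<inter> C0 = {}" "k \<notin> c ` R" "kap V R \<le> card C0 + 1"
        using less.prems by simp_all
      show ?thesis
      proof (cases "c y \<in> c ` R")
        case False
        have "card C0 < kap V (insert y R)"
        proof (rule lemA[OF g L0 C0E hC Vne])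
          show "insert y R \<subseteq> E" using yF0 F0E less.prems by blast
          have "c ` (R - {y}) \<subseteq> c ` R" by (rule image_mono) (rule Diff_subset)
          then have "c y \<notin> c ` (R - {y})" using False by blast
          then show "inj_on c (insert y R)" using less.prems by simp
          show "c ` insert y R \<inter> C0 = {}" using less.prems cy by simp
        qed
        then show ?thesis using kins less.prems by simp
      next
        case True
        then obtain r where r0: "c y = c r" "r \<in> R" by (rule imageE)
        then have r: "r \<in> R" "c r = c y" by simp_all
        have ry: "r \<noteq> y" using r(1) yR by blast
        have "r \<notin> L0"
        proof
          assume "r \<in> L0"
          moreover have "y \<in> L0" using yF0 unfolding F0_def by blast
          ultimately show False using injL0 r(2) ry inj_onD by metis
        qed
        then have rF0: "r \<notin> F0" unfolding F0_def by blast
        let ?R' = "insert y (R - {r})"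
        have "?R' \<inter> F0 = insert y (R \<inter> F0)" using yF0 rF0 by blast
        then have "card (?R' \<inter> F0) = card (R \<inter> F0) + 1"
          using yR finRF by simp
        then have lt: "card E - card (?R' \<inter> F0) < card E - card (R \<inter> F0)"
          using finIL[of ?R'] by linarith
        have eqR: "?R' = insert y R - {r}" using ry by blast
        have rE: "r \<in> E" using r(1) less.prems by blast
        obtain u' v' where r2: "r = {u', v'}" using edge_pair[OF g rE] by blast
        have "\<forall>e\<in>{r}. \<exists>u v. e = {u, v}" using r2 by blast
        then have "kap V (insert y R - {r}) \<le> kap V (insert y R) + card {r}"
          by (rule kap_remove[OF finV, rotated]) simp
        then have kR': "kap V ?R' \<le> card C0 + 1" using eqR kins less.prems by simp
        have injR': "inj_on c ?R'"
        proof -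
          have "inj_on c (R - {r})" using inj_on_subset[OF pR(2) Diff_subset] .
          moreover have "c y \<notin> c ` (R - {r})"
          proof
            assume "c y \<in> c ` (R - {r})"
            then obtain r' where r': "c y = c r'" "r' \<in> R - {r}" by (rule imageE)
            then have "c r' = c r" using r(2) by simp
            then have "r' = r" using pR(2) r(1) r'(2) inj_onD by fastforce
            then show False using r'(2) by simp
          qed
          moreover have "R - {r} - {y} = R - {r}" using yR by blast
          ultimately show ?thesis by simp
        qed
        have sub: "c ` (R - {r}) \<subseteq> c ` R" by (rule image_mono) (rule Diff_subset)
        have cky: "c y \<noteq> k"
        proof
          assume "c y = k" then show False using True pR(4) by simp
        qed
        have "?P ?R'"
        proof (intro conjI)
          show "?R' \<subseteq> E" using yF0 F0E less.prems by blast
          show "inj_on c ?R'" by (rule injR')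
          have "c ` (R - {r}) \<inter> C0 \<subseteq> c ` R \<inter> C0" using Int_mono[OF sub subset_refl] .
          then have "c ` (R - {r}) \<inter> C0 = {}" using pR(3) by simp
          then show "c ` ?R' \<inter> C0 = {}" using cy by simp
          have "k \<notin> c ` (R - {r})" by (rule contra_subsetD[OF sub pR(4)])
          then show "k \<notin> c ` ?R'" using cky by simp
          show "kap V ?R' \<le> card C0 + 1" by (rule kR')
        qed
        then show ?thesis by (rule less.hyps[OF lt])
      qed
    qed
  qed
  from ex[OF PR1] obtain R where PR: "?P R" and reachR: "\<forall>a b. {a, b} \<in> F0 \<longrightarrow> reachable R a b"
    by blast
  have pR: "R \<subseteq> E" "inj_on c R" "c ` R \<inter> C0 = {}" "k \<notin> c ` R" "kap V R \<le> card C0 + 1"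
    using PR by simp_all
  have sub: "reachable R x y" if "x \<in> V" "y \<in> V" "reachable F0 x y" for x y
  proof (rule reach_sub[of F0 R])
    show "reachable R a b" if "{a, b} \<in> F0" for a b using reachR that by blast
    show "reachable F0 x y" by (rule that(3))
  qed
  have "card C0 < kap V R" by (rule lemA[OF g L0 C0E hC Vne pR(1-3)])
  moreover have "kap V R \<le> kap V F0" by (rule kap_le[OF finV sub])
  ultimately have keq: "kap V R = kap V F0" using kapF0 by simp
  show ?thesis
  proof (rule ccontr)
    assume nF: "\<not> reachable (L0 - {x\<in>L0. c x \<in> C0}) u v"
    have nR: "\<not> reachable R u v"
    proof
      assume ruv: "reachable R u v"
      have kk: "reachable R u v \<Longrightarrow> reachable F0 u v" by (rule kap_eq[OF finV sub keq uvV])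
      have "reachable F0 u v" using kk ruv by blast
      then show False using nF unfolding F0_def X_def by simp
    qed
    have kins: "kap V (insert {u, v} R) < kap V R" using kap_insert_cross[OF finV uvV nR] .
    have "card C0 < kap V (insert {u, v} R)"
    proof (rule lemA[OF g L0 C0E hC Vne])
      show "insert {u, v} R \<subseteq> E" using e(1) pR(1) by simp
      have s2: "c ` (R - {{u, v}}) \<subseteq> c ` R" by (rule image_mono) (rule Diff_subset)
      have "k \<notin> c ` (R - {{u, v}})" by (rule contra_subsetD[OF s2 pR(4)])
      then have "c {u, v} \<notin> c ` (R - {{u, v}})" using e(2) by simp
      then show "inj_on c (insert {u, v} R)" using pR(2) by simp
      show "c ` insert {u, v} R \<inter> C0 = {}" using pR(3) e(2) kC0 by simp
    qed
    then show False using kins keq kapF0 by simp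
  qed
qed

theorem lemma9:
  fixes V :: "'v set" and E :: "'v set set" and c :: "'v set \<Rightarrow> 'c"
  defines "\<LL> \<equiv> {F. connected_representing V E c F}"
  defines "C0 \<equiv> (\<Inter>F\<in>\<LL>. c ` cut_edges F)"
  assumes "graph V E"
    and "\<LL> \<noteq> {}"
    and "C0 \<noteq> {}"
  shows "good_edge_coloring V E c \<and>
         (\<exists>F X. good_witness V E c F X \<and> C0 \<subseteq> c ` X)"
proof -
  have g: "graph V E" by (rule assms(3))
  obtain L0 where L0: "connected_representing V E c L0" using assms(4) unfolding \<LL>_def by blast
  have hC: "C0 \<subseteq> c ` cut_edges L" if "connected_representing V E c L" for L
    using that unfolding C0_def \<LL>_def by blast
  have injL0: "inj_on c L0" and imgL0: "c ` L0 = c ` E" and L0E: "L0 \<subseteq> E"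
    using L0 unfolding connected_representing_def representing_def bij_betw_def by auto
  have cutL0: "cut_edges L0 \<subseteq> L0" unfolding cut_edges_def by blast
  have "c ` cut_edges L0 \<subseteq> c ` L0" by (rule image_mono[OF cutL0])
  then have C0E: "C0 \<subseteq> c ` E" using hC[OF L0] imgL0 by simp
  obtain k0 where k0: "k0 \<in> C0" using assms(5) by blast
  then have "k0 \<in> c ` E" using C0E by (rule subsetD[rotated])
  then obtain e0 where e0: "e0 \<in> E" by blast
  obtain a0 b0 where "e0 = {a0, b0}" "a0 \<in> V" "b0 \<in> V" using edge_pair[OF g e0] by blast
  then have Vne: "V \<noteq> {}" by blast
  define X where "X = {x\<in>L0. c x \<in> C0}"
  have CX: "C0 \<subseteq> c ` X"
  proof
    fix k assume k: "k \<in> C0"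
    then have "k \<in> c ` E" using C0E by (rule subsetD[rotated])
    then have "k \<in> c ` L0" using imgL0 by simp
    then obtain x where x: "k = c x" "x \<in> L0" by (rule imageE)
    then have "x \<in> X" using k unfolding X_def by simp
    then show "k \<in> c ` X" using x(1) by (rule rev_image_eqI)
  qed
  have Xne: "X \<noteq> {}" using CX k0 by blast
  have Xcut: "X \<subseteq> cut_edges L0"
  proof
    fix x assume x: "x \<in> X"
    then have "c x \<in> C0" unfolding X_def by simp
    then have "c x \<in> c ` cut_edges L0" using hC[OF L0] by (rule subsetD[rotated])
    then obtain x' where x': "c x = c x'" "x' \<in> cut_edges L0" by (rule imageE)
    have "x \<in> L0" using x unfolding X_def by simp
    moreover have "x' \<in> L0" using x'(2) cutL0 by blast
    ultimately have "x = x'" using injL0 x'(1) inj_onD by metis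
    then show "x \<in> cut_edges L0" using x'(2) by simp
  qed
  have cond: "c {u, v} \<in> c ` X" if uv: "{u, v} \<in> E" "\<not> reachable (L0 - X) u v" for u v
  proof (cases "c {u, v} \<in> C0")
    case True then show ?thesis using CX by blast
  next
    case False
    then obtain L' where L': "connected_representing V E c L'" "c {u, v} \<notin> c ` cut_edges L'"
      unfolding C0_def \<LL>_def by blast
    have "reachable (L0 - {x\<in>L0. c x \<in> C0}) u v"
      by (rule lemB[OF g L0 C0E hC Vne L'(1) L'(2) False uv(1) refl])
    then show ?thesis using uv(2) unfolding X_def by simp
  qed
  have gw: "good_witness V E c L0 X"
    unfolding good_witness_def using L0 Xne Xcut cond by blast
  then show ?thesis using CX unfolding good_edge_coloring_def by blast
qed

end
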